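(* Let $\mathcal{N}=(N,M_0)$ be a two-level PT-net system (transitions partitioned into low-level $L$ and high-level $H$) with the property BNDC, and let $M_1$ and $M_2$ be reachable markings of $\mathcal{N}\setminus H$ and $\mathcal{N}$, respectively. If $M_1\,R\,M_2$, then $\mathcal{L}(N\setminus H,M_1)=\mathcal{L}(N\setminus H,M_2)$.
   Context: A PT-net is $N=(P,T,F)$ with $P,T$ finite disjoint and $F:(P\times T)\cup(T\times P)\to\mathbb{N}$; markings $M:P\to\mathbb{N}$; $t$ enabled at $M$ ($M[t\rangle$) iff $M(p)\ge F(p,t)$ for all $p$, firing gives $M'(p)=M(p)+F(t,p)-F(p,t)$ ($M[t\rangle M'$); extended to sequences. $N\setminus H$ deletes the transitions of $H$. $\mathcal{L}(N\setminus H,M)$ is the set of all sequences $s\in L^*$ with $M[s\rangle$ in $N\setminus H$. For systems with disjoint place sets, $\mathcal{N}_1|\mathcal{N}_2$ has the union of places, the union of transitions (shared transitions synchronize, arcs inherited from each component on its own places), and union of initial markings. A high-level net system has only high-level transitions. Transitions in $L$ are observable, those in $H$ unobservable; weak bisimilarity $\approx$ is the existence of a relation between reachable markings containing the initial pair such that, for related $(M,M')$ and symmetrically, an observable step $M[l\rangle$ is matched by unobservable steps, $l$, unobservable steps leading to a related pair, and an unobservable step is matched by unobservable steps leading to a related pair. BNDC: for every high-level net system $\mathcal{N}'$ (places disjoint from those of $\mathcal{N}$) with transition set $H'$ disjoint from $L$, $\mathcal{N}\setminus H\approx(\mathcal{N}|\mathcal{N}')\setminus(H\setminus H')$. The relation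 $R$: $M\,R\,M'$ iff there exist $w\in L^*$ and $w'\in(L\cup H)^*$ with $M_0[w\rangle M$, $M_0[w'\rangle M'$, and $w$ the projection of $w'$ onto $L^*$. *)

theory Defs
  imports Main
begin

text \<open>PT-nets. Places of type 'p, transitions of type 't.
  The flow function F is split into pre (F(p,t)) and post (F(t,p)).\<close>

record ('p, 't) ptnet =
  places :: "'p set"
  trans  :: "'t set"
  pre    :: "'p \<Rightarrow> 't \<Rightarrow> nat"
  post   :: "'t \<Rightarrow> 'p \<Rightarrow> nat"

type_synonym 'p marking = "'p \<Rightarrow> nat"

definition wf_net :: "('p, 't) ptnet \<Rightarrow> bool" where
  "wf_net N \<longleftrightarrow> finite (places N) \<and> finite (trans N) \<and>
     (\<forall>p t. (p \<notin> places N \<or> t \<notin> trans N) \<longrightarrow> pre N p t = 0 \<and> post N t p = 0)"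

definition is_marking :: "('p, 't) ptnet \<Rightarrow> 'p marking \<Rightarrow> bool" where
  "is_marking N M \<longleftrightarrow> (\<forall>p. p \<notin> places N \<longrightarrow> M p = 0)"

definition enabled :: "('p, 't) ptnet \<Rightarrow> 'p marking \<Rightarrow> 't \<Rightarrow> bool" where
  "enabled N M t \<longleftrightarrow> t \<in> trans N \<and> (\<forall>p. pre N p t \<le> M p)"

definition fire :: "('p, 't) ptnet \<Rightarrow> 'p marking \<Rightarrow> 't \<Rightarrow> 'p marking" where
  "fire N M t = (\<lambda>p. M p + post N t p - pre N p t)"

definition step :: "('p, 't) ptnet \<Rightarrow> 'p marking \<Rightarrow> 't \<Rightarrow> 'p marking \<Rightarrow> bool" where
  "step N M t M' \<longleftrightarrow> enabled N M t \<and> M' = fire N M t"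

fun run :: "('p, 't) ptnet \<Rightarrow> 'p marking \<Rightarrow> 't list \<Rightarrow> 'p marking option" where
  "run N M [] = Some M"
| "run N M (t # s) = (if enabled N M t then run N (fire N M t) s else None)"

definition reach :: "('p, 't) ptnet \<Rightarrow> 'p marking \<Rightarrow> 'p marking set" where
  "reach N M0 = {M. \<exists>s. run N M0 s = Some M}"

definition del :: "('p, 't) ptnet \<Rightarrow> 't set \<Rightarrow> ('p, 't) ptnet" where
  "del N H = N\<lparr>trans := trans N - H\<rparr>"

definition lang :: "('p, 't) ptnet \<Rightarrow> 't set \<Rightarrow> 'p marking \<Rightarrow> 't list set" where
  "lang N L M = {s. set s \<subseteq> L \<and> run N M s \<noteq> None}"

text \<open>Parallel composition of nets with disjoint place sets (disjointness via the sum type);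
  shared transitions synchronise.\<close>
definition compose :: "('p, 't) ptnet \<Rightarrow> ('q, 't) ptnet \<Rightarrow> ('p + 'q, 't) ptnet" where
  "compose N1 N2 = \<lparr> places = Inl ` places N1 \<union> Inr ` places N2,
                     trans = trans N1 \<union> trans N2,
                     pre = (\<lambda>x t. case x of Inl p \<Rightarrow> pre N1 p t | Inr q \<Rightarrow> pre N2 q t),
                     post = (\<lambda>t x. case x of Inl p \<Rightarrow> post N1 t p | Inr q \<Rightarrow> post N2 t q) \<rparr>"

definition compose_marking :: "'p marking \<Rightarrow> 'q marking \<Rightarrow> ('p + 'q) marking" where
  "compose_marking M1 M2 = (\<lambda>x. case x of Inl p \<Rightarrow> M1 p | Inr q \<Rightarrow> M2 q)"

definition tau_steps :: "('p, 't) ptnet \<Rightarrow> 't set \<Rightarrow> 'p marking \<Rightarrow> 'p marking \<Rightarrow> bool" where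
  "tau_steps N L M M' \<longleftrightarrow> (\<exists>s. set s \<inter> L = {} \<and> run N M s = Some M')"

definition weak_bisim ::
  "('p, 't) ptnet \<Rightarrow> 'p marking \<Rightarrow> ('q, 't) ptnet \<Rightarrow> 'q marking \<Rightarrow> 't set \<Rightarrow> bool" where
  "weak_bisim N1 M01 N2 M02 L \<longleftrightarrow>
    (\<exists>R. (M01, M02) \<in> R \<and> R \<subseteq> reach N1 M01 \<times> reach N2 M02 \<and>
      (\<forall>(M, M') \<in> R.
         (\<forall>l Ma. l \<in> L \<and> step N1 M l Ma \<longrightarrow>
            (\<exists>Ma' Mb' Mc'. tau_steps N2 L M' Ma' \<and> step N2 Ma' l Mb' \<and>
                tau_steps N2 L Mb' Mc' \<and> (Ma, Mc') \<in> R)) \<and>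
         (\<forall>t Ma. t \<notin> L \<and> step N1 M t Ma \<longrightarrow>
            (\<exists>Mc'. tau_steps N2 L M' Mc' \<and> (Ma, Mc') \<in> R)) \<and>
         (\<forall>l Ma'. l \<in> L \<and> step N2 M' l Ma' \<longrightarrow>
            (\<exists>Ma Mb Mc. tau_steps N1 L M Ma \<and> step N1 Ma l Mb \<and>
                tau_steps N1 L Mb Mc \<and> (Mc, Ma') \<in> R)) \<and>
         (\<forall>t Ma'. t \<notin> L \<and> step N2 M' t Ma' \<longrightarrow>
            (\<exists>Mc. tau_steps N1 L M Mc \<and> (Mc, Ma') \<in> R))))"

definition two_level :: "('p, 't) ptnet \<Rightarrow> 'p marking \<Rightarrow> 't set \<Rightarrow> 't set \<Rightarrow> bool" where
  "two_level N M0 L H \<longleftrightarrow> wf_net N \<and> is_marking N M0 \<and> trans N = L \<union> H \<and> L \<inter> H = {}"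

text \<open>The places of the attacker net N' are taken from nat (every finite place set
  is isomorphic to a subset of nat); disjointness from the places of N is ensured by the
  sum type in the composition. N' is high-level: its transitions H' are disjoint from L.\<close>
definition BNDC :: "('p, 't) ptnet \<Rightarrow> 'p marking \<Rightarrow> 't set \<Rightarrow> 't set \<Rightarrow> bool" where
  "BNDC N M0 L H \<longleftrightarrow>
    (\<forall>(N' :: (nat, 't) ptnet) M0'. wf_net N' \<and> is_marking N' M0' \<and> trans N' \<inter> L = {} \<longrightarrow>
       weak_bisim (del N H) M0
                  (del (compose N N') (H - trans N')) (compose_marking M0 M0') L)"

definition relR :: "('p, 't) ptnet \<Rightarrow> 'p marking \<Rightarrow> 't set \<Rightarrow> 't set \<Rightarrow>
                    'p marking \<Rightarrow> 'p marking \<Rightarrow> bool" where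
  "relR N M0 L H M M' \<longleftrightarrow>
    (\<exists>w w'. set w \<subseteq> L \<and> set w' \<subseteq> L \<union> H \<and>
       run N M0 w = Some M \<and> run N M0 w' = Some M' \<and> w = filter (\<lambda>t. t \<in> L) w')"

end

theory Submission
  imports Defs
begin

definition att :: "'t set \<Rightarrow> (nat,'t) ptnet" where
  "att H = \<lparr>places = {0}, trans = H, pre = (\<lambda>p t. if p = 0 \<and> t \<in> H then 1 else 0),
            post = (\<lambda>t p. 0)\<rparr>"

lemma att_wf: "finite H \<Longrightarrow> wf_net (att H)"
  by (auto simp: wf_net_def att_def)

lemma all_sum: "(\<forall>x::'a+'b. P x) \<longleftrightarrow> (\<forall>a. P (Inl a)) \<and> (\<forall>b. P (Inr b))"
  by (metis sum.exhaust)

lemma enabled_C: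
  "enabled (del (compose N (att H)) (H - trans (att H))) (compose_marking M c) t \<longleftrightarrow>
    t \<in> trans N \<union> H \<and> (\<forall>p. pre N p t \<le> M p) \<and> (t \<in> H \<longrightarrow> 1 \<le> c 0)"
  unfolding enabled_def del_def compose_def compose_marking_def att_def
  by (auto simp: all_sum split: if_splits)

lemma fire_C:
  "fire (del (compose N (att H)) (H - trans (att H))) (compose_marking M c) t =
    compose_marking (fire N M t) (\<lambda>n. c n - (if n = 0 \<and> t \<in> H then 1 else 0))"
  unfolding fire_def del_def compose_def compose_marking_def att_def
  by (rule ext) (auto split: sum.splits)

lemma enabled_D: "enabled (del N H) M t \<longleftrightarrow> t \<in> trans N - H \<and> (\<forall>p. pre N p t \<le> M p)"
  by (simp add: enabled_def del_def)

lemma fire_D: "fire (del N H) = fire N"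
  by (rule ext)+ (simp add: fire_def del_def)

lemma run_D: "set s \<inter> H = {} \<Longrightarrow> run (del N H) M s = run N M s"
  by (induction s arbitrary: M) (auto simp: enabled_D fire_D, auto simp: enabled_def)

lemma tau_D: "trans N - H \<subseteq> L \<Longrightarrow> tau_steps (del N H) L M M' \<Longrightarrow> M' = M"
proof -
  assume a: "trans N - H \<subseteq> L" "tau_steps (del N H) L M M'"
  then obtain s where s: "set s \<inter> L = {}" "run (del N H) M s = Some M'"
    unfolding tau_steps_def by blast
  show ?thesis
  proof (cases s)
    case Nil thus ?thesis using s by simp
  next
    case (Cons t u)
    with s a show ?thesis by (auto simp: enabled_D split: if_splits)
  qed
qed

lemma tau_C: "trans N \<subseteq> L \<union> H \<Longrightarrow> L \<inter> H = {} \<Longrightarrow>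
  tau_steps (del (compose N (att H)) (H - trans (att H))) L (compose_marking M (\<lambda>_. 0)) X
   \<Longrightarrow> X = compose_marking M (\<lambda>_. 0)"
proof -
  assume a: "trans N \<subseteq> L \<union> H" "L \<inter> H = {}"
     "tau_steps (del (compose N (att H)) (H - trans (att H))) L (compose_marking M (\<lambda>_. 0)) X"
  then obtain s where s: "set s \<inter> L = {}"
    "run (del (compose N (att H)) (H - trans (att H))) (compose_marking M (\<lambda>_. 0)) s = Some X"
    unfolding tau_steps_def by blast
  show ?thesis
  proof (cases s)
    case Nil thus ?thesis using s by simp
  next
    case (Cons t u)
    with s a show ?thesis by (auto simp: enabled_C split: if_splits)
  qed
qed

lemma run_C:
  assumes "trans N \<subseteq> L \<union> H"
  shows "run N M u = Some M' \<Longrightarrow> set u \<subseteq> L \<union> H \<Longrightarrow> length (filter (\<lambda>t. t \<in> H) u) \<le> c 0 \<Longrightarrow>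
    run (del (compose N (att H)) (H - trans (att H))) (compose_marking M c) u =
      Some (compose_marking M' (\<lambda>n. c n - (if n = 0 then length (filter (\<lambda>t. t \<in> H) u) else 0)))"
proof (induction u arbitrary: M c)
  case Nil
  then show ?case by (auto simp: compose_marking_def intro!: ext split: sum.splits)
next
  case (Cons t u)
  from Cons.prems(1) have en: "enabled N M t" and r: "run N (fire N M t) u = Some M'"
    by (auto split: if_splits)
  have enC: "enabled (del (compose N (att H)) (H - trans (att H))) (compose_marking M c) t"
    unfolding enabled_C using en Cons.prems(3) by (auto simp: enabled_def)
  let ?c = "\<lambda>n. c n - (if n = 0 \<and> t \<in> H then 1 else 0)"
  have "run (del (compose N (att H)) (H - trans (att H))) (compose_marking (fire N M t) ?c) u =
      Some (compose_marking M' (\<lambda>n. ?c n - (if n = 0 then length (filter (\<lambda>t. t \<in> H) u) else 0)))"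
    using Cons.IH[OF r] Cons.prems(2,3) by (auto split: if_splits)
  moreover have "(\<lambda>n. ?c n - (if n = 0 then length (filter (\<lambda>t. t \<in> H) u) else 0)) =
     (\<lambda>n. c n - (if n = 0 then length (filter (\<lambda>t. t \<in> H) (t # u)) else 0))"
    by (rule ext) auto
  ultimately show ?case using enC by (simp add: fire_C)
qed

theorem lemma2:
  fixes N :: "('p, 't) ptnet" and M0 M1 M2 :: "'p marking" and L H :: "'t set"
  assumes "two_level N M0 L H"
    and "BNDC N M0 L H"
    and "M1 \<in> reach (del N H) M0"
    and "M2 \<in> reach N M0"
    and "relR N M0 L H M1 M2"
  shows "lang (del N H) L M1 = lang (del N H) L M2"
proof -
  define D where "D = del N H"
  define C where "C = del (compose N (att H)) (H - trans (att H))"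
  have tl: "wf_net N" "is_marking N M0" "trans N = L \<union> H" "L \<inter> H = {}"
    using assms(1) unfolding two_level_def by auto
  have finH: "finite H" using tl unfolding wf_net_def by auto
  obtain w w' where ww: "set w \<subseteq> L" "set w' \<subseteq> L \<union> H" "run N M0 w = Some M1"
    "run N M0 w' = Some M2" "w = filter (\<lambda>t. t \<in> L) w'"
    using assms(5) unfolding relR_def by blast
  define k where "k = length (filter (\<lambda>t. t \<in> H) w')"
  define c :: "nat marking" where "c = (\<lambda>n. if n = 0 then k else 0)"
  have ism: "is_marking (att H) c" by (simp add: is_marking_def att_def c_def)
  have "weak_bisim D M0 C (compose_marking M0 c) L"
  proof -
    have "trans (att H) \<inter> L = {}" using tl(4) by (auto simp: att_def)
    then show ?thesis
      using assms(2)[unfolded BNDC_def, rule_format, of "att H" c] att_wf[OF finH] ism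
      unfolding D_def C_def by blast
  qed
  then obtain R where R0: "(M0, compose_marking M0 c) \<in> R" and
    RB: "\<forall>(M, M') \<in> R.
         (\<forall>l Ma. l \<in> L \<and> step D M l Ma \<longrightarrow>
            (\<exists>Ma' Mb' Mc'. tau_steps C L M' Ma' \<and> step C Ma' l Mb' \<and>
                tau_steps C L Mb' Mc' \<and> (Ma, Mc') \<in> R)) \<and>
         (\<forall>t Ma. t \<notin> L \<and> step D M t Ma \<longrightarrow>
            (\<exists>Mc'. tau_steps C L M' Mc' \<and> (Ma, Mc') \<in> R)) \<and>
         (\<forall>l Ma'. l \<in> L \<and> step C M' l Ma' \<longrightarrow>
            (\<exists>Ma Mb Mc. tau_steps D L M Ma \<and> step D Ma l Mb \<and>
                tau_steps D L Mb Mc \<and> (Mc, Ma') \<in> R)) \<and>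
         (\<forall>t Ma'. t \<notin> L \<and> step C M' t Ma' \<longrightarrow>
            (\<exists>Mc. tau_steps D L M Mc \<and> (Mc, Ma') \<in> R))"
    unfolding weak_bisim_def by blast
  have c1: "\<And>M M' l Ma. (M, M') \<in> R \<Longrightarrow> l \<in> L \<Longrightarrow> step D M l Ma \<Longrightarrow>
            (\<exists>Ma' Mb' Mc'. tau_steps C L M' Ma' \<and> step C Ma' l Mb' \<and>
                tau_steps C L Mb' Mc' \<and> (Ma, Mc') \<in> R)"
    using RB by fast
  have c3: "\<And>M M' l Ma'. (M, M') \<in> R \<Longrightarrow> l \<in> L \<Longrightarrow> step C M' l Ma' \<Longrightarrow>
            (\<exists>Ma Mb Mc. tau_steps D L M Ma \<and> step D Ma l Mb \<and>
                tau_steps D L Mb Mc \<and> (Mc, Ma') \<in> R)"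
    using RB by fast
  have c4: "\<And>M M' t Ma'. (M, M') \<in> R \<Longrightarrow> t \<notin> L \<Longrightarrow> step C M' t Ma' \<Longrightarrow>
            (\<exists>Mc. tau_steps D L M Mc \<and> (Mc, Ma') \<in> R)"
    using RB by fast
  have tauD: "\<And>M M'. tau_steps D L M M' \<Longrightarrow> M' = M"
    unfolding D_def by (rule tau_D) (use tl in auto)
  have tauC: "\<And>M X. tau_steps C L (compose_marking M (\<lambda>_. 0)) X \<Longrightarrow> X = compose_marking M (\<lambda>_. 0)"
    unfolding C_def by (rule tau_C) (use tl in auto)
  have A: "\<forall>M M' M''. (M, M') \<in> R \<longrightarrow> run C M' u = Some M'' \<longrightarrow>
      (\<exists>Ma. run D M (filter (\<lambda>t. t \<in> L) u) = Some Ma \<and> (Ma, M'') \<in> R)" for u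
  proof (induction u)
    case Nil then show ?case by simp
  next
    case (Cons t u)
    show ?case
    proof (intro allI impI)
      fix M M' M''
      assume inR: "(M, M') \<in> R" and r: "run C M' (t # u) = Some M''"
      from r have en: "enabled C M' t" and r2: "run C (fire C M' t) u = Some M''"
        by (auto split: if_splits)
      have st: "step C M' t (fire C M' t)" using en by (simp add: step_def)
      show "\<exists>Ma. run D M (filter (\<lambda>t. t \<in> L) (t # u)) = Some Ma \<and> (Ma, M'') \<in> R"
      proof (cases "t \<in> L")
        case True
        then obtain Ma Mb Mc where "tau_steps D L M Ma" "step D Ma t Mb" "tau_steps D L Mb Mc"
          "(Mc, fire C M' t) \<in> R"
          using c3[OF inR True st] by blast
        with tauD have "step D M t Mb" "(Mb, fire C M' t) \<in> R" by blast+
        then show ?thesis using Cons.IH r2 True by (auto simp: step_def)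
      next
        case False
        then obtain Mc where "tau_steps D L M Mc" "(Mc, fire C M' t) \<in> R"
          using c4[OF inR False st] by blast
        with tauD have "(M, fire C M' t) \<in> R" by blast
        then show ?thesis using Cons.IH r2 False by auto
      qed
    qed
  qed
  have "run C (compose_marking M0 c) w' =
      Some (compose_marking M2 (\<lambda>n. c n - (if n = 0 then k else 0)))"
    unfolding C_def k_def using run_C[of N L H, OF _ ww(4) ww(2)] tl(3) by (simp add: c_def k_def)
  moreover have "(\<lambda>n. c n - (if n = 0 then k else 0)) = (\<lambda>_. 0)" by (auto simp: c_def)
  ultimately have "run C (compose_marking M0 c) w' = Some (compose_marking M2 (\<lambda>_. 0))" by simp
  then obtain Ma where "run D M0 w = Some Ma" "(Ma, compose_marking M2 (\<lambda>_. 0)) \<in> R"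
    using A R0 ww(5) by blast
  moreover have "run D M0 w = Some M1"
    unfolding D_def using ww(1,3) tl(4) run_D[of w H N M0] by auto
  ultimately have R12: "(M1, compose_marking M2 (\<lambda>_. 0)) \<in> R" by simp
  have B: "\<forall>M Ma. (M, compose_marking Ma (\<lambda>_. 0)) \<in> R \<longrightarrow> set s \<subseteq> L \<longrightarrow>
      (run D M s \<noteq> None \<longleftrightarrow> run D Ma s \<noteq> None)" for s
  proof (induction s)
    case Nil then show ?case by simp
  next
    case (Cons l s)
    show ?case
    proof (intro allI impI)
      fix M Ma
      assume inR: "(M, compose_marking Ma (\<lambda>_. 0)) \<in> R" and sl: "set (l # s) \<subseteq> L"
      have lL: "l \<in> L" and lH: "l \<notin> H" using sl tl(4) by auto
      have eq: "enabled D Ma l \<longleftrightarrow> enabled C (compose_marking Ma (\<lambda>_. 0)) l"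
        using enabled_C[of N H Ma "\<lambda>_. 0" l] lL lH tl(3) unfolding D_def C_def enabled_D by auto
      have fC: "fire C (compose_marking Ma (\<lambda>_. 0)) l = compose_marking (fire D Ma l) (\<lambda>_. 0)"
        using fire_C[of N H Ma "\<lambda>_. 0" l] lH unfolding C_def D_def fire_D by simp
      show "run D M (l # s) \<noteq> None \<longleftrightarrow> run D Ma (l # s) \<noteq> None"
      proof (cases "enabled D M l")
        case True
        have st: "step D M l (fire D M l)" using True by (simp add: step_def)
        then obtain Ma' Mb' Mc' where "tau_steps C L (compose_marking Ma (\<lambda>_. 0)) Ma'"
          "step C Ma' l Mb'" "tau_steps C L Mb' Mc'" "(fire D M l, Mc') \<in> R"
          using c1[OF inR lL st] by blast
        note h = this
        have e1: "Ma' = compose_marking Ma (\<lambda>_. 0)" using tauC h(1) by blast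
        have e2: "Mb' = compose_marking (fire D Ma l) (\<lambda>_. 0)" using h(2) e1 fC by (simp add: step_def)
        have e3: "Mc' = Mb'" using tauC h(3) e2 by blast
        have "enabled C (compose_marking Ma (\<lambda>_. 0)) l"
          "(fire D M l, compose_marking (fire D Ma l) (\<lambda>_. 0)) \<in> R"
          using h(2,4) e1 e2 e3 by (auto simp: step_def)
        then show ?thesis using True eq Cons.IH sl by auto
      next
        case False
        have "\<not> enabled D Ma l"
        proof
          assume "enabled D Ma l"
          then have "step C (compose_marking Ma (\<lambda>_. 0)) l (fire C (compose_marking Ma (\<lambda>_. 0)) l)"
            using eq by (simp add: step_def)
          then obtain Mx Mb Mc where "tau_steps D L M Mx" "step D Mx l Mb"
            using c3[OF inR lL] by blast
          then show False using tauD False by (auto simp: step_def)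
        qed
        then show ?thesis using False by simp
      qed
    qed
  qed
  show ?thesis
    using B R12 unfolding lang_def D_def by blast
qed

end
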